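(* Let $\Phi_1,\Phi_2$ be doubling Young functions such that $\int^\infty\frac{dt}{\Phi_i(t)}<\infty$ for $i=1,2$. Then there exists a doubling Young function $\Phi$ with the following properties: - $\Phi(t)\le\min\{\Phi_1(t),\Phi_2(t)\}$ for all $t$; - $\int^\infty\frac{dt}{\Phi(t)}<\infty$; - there exists $c>0$ such that $\Phi(t)\ge c\min\{\Phi_1(t),\Phi_2(t)\}$ for all sufficiently large $t$.
   Context: A Young function is a convex increasing function $\Phi:[0,\infty)\to[0,\infty)$ with $\Phi(0)=0$. It is doubling if there is $C<\infty$ with $\Phi(2t)\le C\Phi(t)$ for all sufficiently large $t$. *)

theory Defs
  imports "HOL-Analysis.Analysis"
begin

text \<open>Young function on [0,\<infinity>): convex, nondecreasing, nonnegative, vanishing at 0.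
  Functions are modelled as real \<Rightarrow> real; values on negative reals are irrelevant.\<close>
definition young_function :: "(real \<Rightarrow> real) \<Rightarrow> bool" where
  "young_function \<Phi> \<longleftrightarrow> \<Phi> 0 = 0 \<and> (\<forall>t\<ge>0. \<Phi> t \<ge> 0) \<and>
     convex_on {0..} \<Phi> \<and> mono_on {0..} \<Phi>"

definition doubling :: "(real \<Rightarrow> real) \<Rightarrow> bool" where
  "doubling \<Phi> \<longleftrightarrow> (\<exists>C. \<forall>\<^sub>F t in at_top. \<Phi> (2 * t) \<le> C * \<Phi> t)"

text \<open>The integral of 1/\<Phi> converges at infinity (with \<Phi> positive there, so the
  integrand is genuinely defined).\<close>
definition finite_inv_integral :: "(real \<Rightarrow> real) \<Rightarrow> bool" where
  "finite_inv_integral \<Phi> \<longleftrightarrow>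
     (\<exists>a. (\<forall>t\<ge>a. \<Phi> t > 0) \<and> (\<lambda>t. 1 / \<Phi> t) integrable_on {a..})"

end

theory Submission imports Defs begin

lemma restr:
  fixes f :: "real \<Rightarrow> real"
  assumes "f integrable_on {a..}" "\<And>x. x \<ge> a \<Longrightarrow> f x \<ge> 0" "b \<ge> a"
  shows "f integrable_on {b..}"
proof -
  have "f absolutely_integrable_on {a..}" using assms by (intro nonnegative_absolutely_integrable_1) auto
  then have "f absolutely_integrable_on {b..}"
    by (rule set_integrable_subset) (use assms in auto)
  then show ?thesis using set_lebesgue_integral_eq_integral(1) by blast
qed

definition infconv :: "(real \<Rightarrow> real) \<Rightarrow> (real \<Rightarrow> real) \<Rightarrow> real \<Rightarrow> real" where
  "infconv f g t = Inf ((\<lambda>s. f s + g (t - s)) ` {0..t})"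

locale twoy =
  fixes f g :: "real \<Rightarrow> real"
  assumes yf: "young_function f" and yg: "young_function g"
begin

lemma f0: "f 0 = 0" and g0: "g 0 = 0" and fnn: "t \<ge> 0 \<Longrightarrow> f t \<ge> 0" and gnn: "t \<ge> 0 \<Longrightarrow> g t \<ge> 0"
  and fcv: "convex_on {0..} f" and gcv: "convex_on {0..} g"
  using yf yg unfolding young_function_def by auto

lemma fmono: "0 \<le> r \<Longrightarrow> r \<le> s \<Longrightarrow> f r \<le> f s" and gmono: "0 \<le> r \<Longrightarrow> r \<le> s \<Longrightarrow> g r \<le> g s"
  using yf yg unfolding young_function_def mono_on_def by auto

lemma ic_le: "0 \<le> s \<Longrightarrow> s \<le> t \<Longrightarrow> infconv f g t \<le> f s + g (t - s)"
  unfolding infconv_def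
proof (rule cInf_lower)
  show "bdd_below ((\<lambda>s. f s + g (t - s)) ` {0..t})"
    by (rule bdd_belowI[where m=0]) (auto intro!: add_nonneg_nonneg fnn gnn)
qed auto

lemma ic_ge: "0 \<le> t \<Longrightarrow> (\<And>s. 0 \<le> s \<Longrightarrow> s \<le> t \<Longrightarrow> B \<le> f s + g (t - s)) \<Longrightarrow> B \<le> infconv f g t"
  unfolding infconv_def by (rule cInf_greatest) auto

lemma ic_nn: "0 \<le> t \<Longrightarrow> 0 \<le> infconv f g t"
  by (rule ic_ge) (auto intro!: add_nonneg_nonneg fnn gnn)

lemma ic_le_f: "0 \<le> t \<Longrightarrow> infconv f g t \<le> f t"
  using ic_le[of t t] g0 by simp

lemma ic_le_g: "0 \<le> t \<Longrightarrow> infconv f g t \<le> g t"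
  using ic_le[of 0 t] f0 by simp

lemma ic_0: "infconv f g 0 = 0"
  using ic_nn[of 0] ic_le_f[of 0] f0 by simp

lemma ic_lower: "0 \<le> t \<Longrightarrow> min (f (t/2)) (g (t/2)) \<le> infconv f g t"
proof (rule ic_ge)
  fix s assume s: "0 \<le> s" "s \<le> t"
  show "min (f (t/2)) (g (t/2)) \<le> f s + g (t - s)"
  proof (cases "s \<ge> t/2")
    case True
    then have "f (t/2) \<le> f s" using s by (intro fmono) auto
    then show ?thesis using gnn[of "t-s"] s by linarith
  next
    case False
    then have "g (t/2) \<le> g (t-s)" using s by (intro gmono) auto
    then show ?thesis using fnn[of s] s by linarith
  qed
qed

lemma ic_mono: "0 \<le> t \<Longrightarrow> t \<le> t' \<Longrightarrow> infconv f g t \<le> infconv f g t'"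
proof (rule ic_ge)
  fix s assume s: "0 \<le> s" "s \<le> t'" and t: "0 \<le> t" "t \<le> t'"
  show "infconv f g t \<le> f s + g (t' - s)"
  proof (cases "s \<le> t")
    case True
    then have "infconv f g t \<le> f s + g (t - s)" using s by (intro ic_le)
    moreover have "g (t - s) \<le> g (t' - s)" using True t by (intro gmono) auto
    ultimately show ?thesis by linarith
  next
    case False
    then have "infconv f g t \<le> f t + g (t - t)" using t by (intro ic_le) auto
    moreover have "f t \<le> f s" using False t by (intro fmono) auto
    moreover have "g 0 \<le> g (t' - s)" using s by (intro gmono) auto
    ultimately show ?thesis by simp
  qed
qed (auto intro: order_trans)

lemma ic_approx:
  assumes "0 \<le> x" "e > 0"
  obtains s where "0 \<le> s" "s \<le> x" "f s + g (x - s) < infconv f g x + e"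
proof -
  have "\<exists>s. 0 \<le> s \<and> s \<le> x \<and> f s + g (x - s) < infconv f g x + e"
  proof (rule ccontr)
    assume "\<not> ?thesis"
    then have "infconv f g x + e \<le> infconv f g x" by (intro ic_ge) (use assms in force)+
    then show False using assms by simp
  qed
  then show ?thesis using that by blast
qed

lemma ic_convex: "convex_on {0..} (infconv f g)"
proof (rule convex_onI)
  fix t x y :: real
  assume t: "0 < t" "t < 1" and xy: "x \<in> {0..}" "y \<in> {0..}"
  then have x: "0 \<le> x" and y: "0 \<le> y" by auto
  show "infconv f g ((1 - t) *\<^sub>R x + t *\<^sub>R y) \<le> (1 - t) * infconv f g x + t * infconv f g y"
  proof (rule field_le_epsilon)
    fix e :: real assume e: "e > 0"
    obtain sx where sx: "0 \<le> sx" "sx \<le> x" "f sx + g (x - sx) < infconv f g x + e"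
      using ic_approx[OF x e] by blast
    obtain sy where sy: "0 \<le> sy" "sy \<le> y" "f sy + g (y - sy) < infconv f g y + e"
      using ic_approx[OF y e] by blast
    define s where "s = (1-t) * sx + t * sy"
    define z where "z = (1-t) * x + t * y"
    have zs: "z - s = (1-t) * (x - sx) + t * (y - sy)" unfolding s_def z_def by algebra
    have s0: "0 \<le> s" unfolding s_def using t sx sy by (intro add_nonneg_nonneg mult_nonneg_nonneg) auto
    have sz: "s \<le> z" unfolding s_def z_def using t sx sy by (intro add_mono mult_left_mono) auto
    have "infconv f g z \<le> f s + g (z - s)" by (rule ic_le[OF s0 sz])
    also have "f s \<le> (1-t) * f sx + t * f sy"
      using convex_onD[OF fcv, of t sx sy] t sx sy unfolding s_def by (simp add: algebra_simps)
    also have "g (z - s) \<le> (1-t) * g (x - sx) + t * g (y - sy)"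
      using convex_onD[OF gcv, of t "x - sx" "y - sy"] t sx sy unfolding zs by (simp add: algebra_simps)
    also have "(1-t) * f sx + t * f sy + ((1-t) * g (x - sx) + t * g (y - sy))
        = (1-t) * (f sx + g (x - sx)) + t * (f sy + g (y - sy))" by algebra
    also have "\<dots> \<le> (1-t) * (infconv f g x + e) + t * (infconv f g y + e)"
      using t sx(3) sy(3) by (intro add_mono[OF mult_left_mono mult_left_mono]) auto
    also have "\<dots> = (1 - t) * infconv f g x + t * infconv f g y + e" by algebra
    finally show "infconv f g ((1 - t) *\<^sub>R x + t *\<^sub>R y) \<le> (1 - t) * infconv f g x + t * infconv f g y + e"
      unfolding z_def by simp
  qed
qed (simp add: convex_real_interval)

lemma ic_young: "young_function (infconv f g)"
  unfolding young_function_def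
  using ic_0 ic_nn ic_convex ic_mono by (auto simp: mono_on_def)

lemma ic_cont: "0 < a \<Longrightarrow> continuous_on {a..} (infconv f g)"
proof -
  assume a: "0 < a"
  have "continuous_on {0<..} (infconv f g)"
    by (rule convex_on_continuous) (auto intro: convex_on_subset[OF ic_convex])
  then show ?thesis by (rule continuous_on_subset) (use a in auto)
qed

end

lemma doubling_get:
  assumes "young_function f" "doubling f"
  obtains C N where "C \<ge> 1" "N \<ge> 0" "\<And>t. t \<ge> N \<Longrightarrow> f (2 * t) \<le> C * f t"
proof -
  obtain C where "\<forall>\<^sub>F t in at_top. f (2 * t) \<le> C * f t" using assms(2) unfolding doubling_def by blast
  then obtain N where N: "\<And>t. t \<ge> N \<Longrightarrow> f (2 * t) \<le> C * f t" unfolding eventually_at_top_linorder by blast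
  have "f (2 * t) \<le> max 1 C * f t" if "t \<ge> max 0 N" for t
  proof -
    have "f t \<ge> 0" using assms(1) that unfolding young_function_def by auto
    then have "C * f t \<le> max 1 C * f t" by (intro mult_right_mono) auto
    then show ?thesis using N[of t] that by auto
  qed
  then show ?thesis using that[of "max 1 C" "max 0 N"] by auto
qed

theorem lemma3p5:
  fixes \<Phi>1 \<Phi>2 :: "real \<Rightarrow> real"
  assumes "young_function \<Phi>1" "doubling \<Phi>1" "finite_inv_integral \<Phi>1"
      and "young_function \<Phi>2" "doubling \<Phi>2" "finite_inv_integral \<Phi>2"
  shows "\<exists>\<Phi>. young_function \<Phi> \<and> doubling \<Phi> \<and>
           (\<forall>t\<ge>0. \<Phi> t \<le> min (\<Phi>1 t) (\<Phi>2 t)) \<and>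
           finite_inv_integral \<Phi> \<and>
           (\<exists>c>0. \<forall>\<^sub>F t in at_top. \<Phi> t \<ge> c * min (\<Phi>1 t) (\<Phi>2 t))"
proof -
  interpret twoy \<Phi>1 \<Phi>2 using assms by unfold_locales
  define \<Phi> where "\<Phi> = infconv \<Phi>1 \<Phi>2"
  obtain C1 N1 where C1: "C1 \<ge> 1" "N1 \<ge> 0" "\<And>t. t \<ge> N1 \<Longrightarrow> \<Phi>1 (2 * t) \<le> C1 * \<Phi>1 t"
    using doubling_get[OF assms(1,2)] by blast
  obtain C2 N2 where C2: "C2 \<ge> 1" "N2 \<ge> 0" "\<And>t. t \<ge> N2 \<Longrightarrow> \<Phi>2 (2 * t) \<le> C2 * \<Phi>2 t"
    using doubling_get[OF assms(4,5)] by blast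
  define D where "D = max C1 C2"
  define N where "N = max N1 N2"
  have D1: "D \<ge> 1" and N0: "N \<ge> 0" using C1 C2 unfolding D_def N_def by auto
  have dbl1: "\<Phi>1 (2 * t) \<le> D * \<Phi>1 t" if "t \<ge> N" for t
  proof -
    have "C1 * \<Phi>1 t \<le> D * \<Phi>1 t" using fnn[of t] that N0 unfolding D_def by (intro mult_right_mono) auto
    then show ?thesis using C1(3)[of t] that unfolding N_def by auto
  qed
  have dbl2: "\<Phi>2 (2 * t) \<le> D * \<Phi>2 t" if "t \<ge> N" for t
  proof -
    have "C2 * \<Phi>2 t \<le> D * \<Phi>2 t" using gnn[of t] that N0 unfolding D_def by (intro mult_right_mono) auto
    then show ?thesis using C2(3)[of t] that unfolding N_def by auto
  qed
  have upper: "\<Phi> t \<le> min (\<Phi>1 t) (\<Phi>2 t)" if "t \<ge> 0" for t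
    using ic_le_f[OF that] ic_le_g[OF that] unfolding \<Phi>_def by simp
  have low: "min (\<Phi>1 t) (\<Phi>2 t) \<le> D * \<Phi> t" if "t \<ge> 2 * N" for t
  proof -
    have "\<Phi>1 t \<le> D * \<Phi>1 (t/2)" "\<Phi>2 t \<le> D * \<Phi>2 (t/2)"
      using dbl1[of "t/2"] dbl2[of "t/2"] that by auto
    then have "min (\<Phi>1 t) (\<Phi>2 t) \<le> D * min (\<Phi>1 (t/2)) (\<Phi>2 (t/2))"
      using D1 by (auto simp: min_def)
    also have "\<dots> \<le> D * \<Phi> t" using ic_lower[of t] that N0 D1 unfolding \<Phi>_def
      by (intro mult_left_mono) auto
    finally show ?thesis .
  qed
  have young: "young_function \<Phi>" unfolding \<Phi>_def by (rule ic_young)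
  have doubl: "doubling \<Phi>"
    unfolding doubling_def
  proof (intro exI[of _ "D * D"], unfold eventually_at_top_linorder, intro exI[of _ "2 * N"] allI impI)
    fix t assume t: "t \<ge> 2 * N"
    have "\<Phi> (2 * t) \<le> min (\<Phi>1 (2*t)) (\<Phi>2 (2*t))" using upper[of "2*t"] t N0 by auto
    also have "\<dots> \<le> D * min (\<Phi>1 t) (\<Phi>2 t)" using dbl1[of t] dbl2[of t] t N0 D1 by (auto simp: min_def)
    also have "\<dots> \<le> D * (D * \<Phi> t)" using low[OF t] D1 by (intro mult_left_mono) auto
    finally show "\<Phi> (2 * t) \<le> D * D * \<Phi> t" by (simp add: mult.assoc)
  qed
  have ev: "\<forall>\<^sub>F t in at_top. \<Phi> t \<ge> 1 / D * min (\<Phi>1 t) (\<Phi>2 t)"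
    unfolding eventually_at_top_linorder
  proof (intro exI[of _ "2 * N"] allI impI)
    fix t assume t: "t \<ge> 2 * N"
    show "\<Phi> t \<ge> 1 / D * min (\<Phi>1 t) (\<Phi>2 t)" using low[OF t] D1 by (simp add: field_simps)
  qed
  have lowc: "\<exists>c>0. \<forall>\<^sub>F t in at_top. \<Phi> t \<ge> c * min (\<Phi>1 t) (\<Phi>2 t)"
    using ev D1 by (intro exI[of _ "1 / D"]) auto
  obtain a1 where a1: "\<And>t. t \<ge> a1 \<Longrightarrow> \<Phi>1 t > 0" "(\<lambda>t. 1 / \<Phi>1 t) integrable_on {a1..}"
    using assms(3) unfolding finite_inv_integral_def by blast
  obtain a2 where a2: "\<And>t. t \<ge> a2 \<Longrightarrow> \<Phi>2 t > 0" "(\<lambda>t. 1 / \<Phi>2 t) integrable_on {a2..}"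
    using assms(6) unfolding finite_inv_integral_def by blast
  define a where "a = max 1 (max (2 * N) (2 * max a1 a2))"
  have a: "a > 0" "a \<ge> 2 * N" "a \<ge> a1" "a \<ge> a2" "a \<ge> 2 * a1" "a \<ge> 2 * a2"
    unfolding a_def by auto
  have pos: "\<Phi> t > 0" if "t \<ge> a" for t
  proof -
    have "min (\<Phi>1 (t/2)) (\<Phi>2 (t/2)) > 0" using a1(1)[of "t/2"] a2(1)[of "t/2"] that a by auto
    also have "\<dots> \<le> \<Phi> t" using ic_lower[of t] that a unfolding \<Phi>_def by auto
    finally show ?thesis .
  qed
  have i1: "(\<lambda>t. 1 / \<Phi>1 t) integrable_on {a..}"
    by (rule restr[OF a1(2)]) (use a1(1) a in \<open>auto simp: less_imp_le\<close>)
  have i2: "(\<lambda>t. 1 / \<Phi>2 t) integrable_on {a..}"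
    by (rule restr[OF a2(2)]) (use a2(1) a in \<open>auto simp: less_imp_le\<close>)
  have ig: "(\<lambda>t. D * (1 / \<Phi>1 t + 1 / \<Phi>2 t)) integrable_on {a..}"
    using integrable_cmul[OF integrable_add[OF i1 i2], of D] by simp
  have meas: "(\<lambda>t. 1 / \<Phi> t) \<in> borel_measurable (lebesgue_on {a..})"
  proof (rule continuous_imp_measurable_on_sets_lebesgue)
    show "continuous_on {a..} (\<lambda>t. 1 / \<Phi> t)"
      using ic_cont[OF a(1)] pos unfolding \<Phi>_def
      by (intro continuous_intros) (auto simp: less_imp_neq[symmetric] intro!: less_imp_neq)
  qed simp
  have fin: "(\<lambda>t. 1 / \<Phi> t) integrable_on {a..}"
  proof (rule measurable_bounded_by_integrable_imp_integrable_real[OF meas ig])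
    fix t assume "t \<in> {a..}"
    then have t: "t \<ge> a" by simp
    have p1: "\<Phi>1 t > 0" and p2: "\<Phi>2 t > 0" using a1(1) a2(1) t a by auto
    have pt: "\<Phi> t > 0" using pos[OF t] .
    have "min (\<Phi>1 t) (\<Phi>2 t) \<le> D * \<Phi> t" using low[of t] t a by auto
    then have "1 / \<Phi> t \<le> D / min (\<Phi>1 t) (\<Phi>2 t)"
      using p1 p2 pt D1 by (simp add: field_simps)
    also have "\<dots> \<le> D * (1 / \<Phi>1 t + 1 / \<Phi>2 t)"
      using p1 p2 D1 by (auto simp: min_def field_simps)
    finally show "\<bar>1 / \<Phi> t\<bar> \<le> D * (1 / \<Phi>1 t + 1 / \<Phi>2 t)" using pt by simp
  qed simp
  have "finite_inv_integral \<Phi>" unfolding finite_inv_integral_def using pos fin by blast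
  then show ?thesis using young doubl upper lowc by blast
qed

end
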